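(* Let $\kappa_2$ be an infinite regular cardinal. If there exists an $(\aleph_0,\kappa_2)$-peculiar cut in ${}^\omega\omega$, then $\mathrm{cov}(\mathcal M)\le\kappa_2$.
   Context: $\mathrm{cov}(\mathcal M)$ is the least number of meagre subsets of the real line (equivalently of ${}^\omega2$) needed to cover it. For $f,g\in{}^\omega\omega$: $f\le^*g$ iff $f(n)\le g(n)$ for all but finitely many $n$; $f<^*g$ iff $f(n)<g(n)$ for all but finitely many $n$. For infinite regular cardinals $\kappa_1,\kappa_2$, a $(\kappa_1,\kappa_2)$-peculiar cut in ${}^\omega\omega$ is a pair $(\langle f_i:i<\kappa_1\rangle,\langle f^\alpha:\alpha<\kappa_2\rangle)$ of sequences in ${}^\omega\omega$ such that: ($\alpha$) $f_j<^*f_i$ for $i<j<\kappa_1$; ($\beta$) $f^\alpha<^*f^\beta$ for $\alpha<\beta<\kappa_2$; ($\gamma$) $f^\alpha<^*f_i$ for all $i<\kappa_1$, $\alpha<\kappa_2$; ($\delta$) if $f\in{}^\omega\omega$ and $f\le^*f_i$ for all $i<\kappa_1$, then $f\le^*f^\alpha$ for some $\alpha<\kappa_2$; ($\varepsilon$) if $f\in{}^\omega\omega$ and $f^\alpha\le^*f$ for all $\alpha<\kappa_2$, then $f_i\le^*f$ for some $i<\kappa_1$. *)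

theory Defs
  imports "HOL-Analysis.Analysis"
begin

(* Cardinals are represented as cardinal-order relations (Main's BNF cardinals):
   a cardinal kappa is a well-order r with Card_order r; its elements are Field r,
   ordered strictly by (a,b) \<in> r \<and> a \<noteq> b.  aleph_0 is natLeq. *)

definition nowhere_dense :: "real set \<Rightarrow> bool" where
  "nowhere_dense A \<longleftrightarrow> interior (closure A) = {}"

definition meagre :: "real set \<Rightarrow> bool" where
  "meagre A \<longleftrightarrow> (\<exists>N :: real set set. countable N \<and> (\<forall>B\<in>N. nowhere_dense B) \<and> A \<subseteq> \<Union>N)"

definition covM_le :: "'b rel \<Rightarrow> bool" where
  "covM_le r \<longleftrightarrow> (\<exists>F :: real set set. (\<forall>A\<in>F. meagre A) \<and> \<Union>F = UNIV \<and> (card_of F, r) \<in> ordLeq)"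

definition le_star :: "(nat \<Rightarrow> nat) \<Rightarrow> (nat \<Rightarrow> nat) \<Rightarrow> bool" where
  "le_star f g \<longleftrightarrow> (\<forall>\<^sub>F n in sequentially. f n \<le> g n)"

definition less_star :: "(nat \<Rightarrow> nat) \<Rightarrow> (nat \<Rightarrow> nat) \<Rightarrow> bool" where
  "less_star f g \<longleftrightarrow> (\<forall>\<^sub>F n in sequentially. f n < g n)"

(* (kappa1,kappa2)-peculiar cut: fl indexed by Field r1 (kappa1), fu indexed by Field r2 (kappa2) *)
definition peculiar_cut :: "'a rel \<Rightarrow> 'b rel \<Rightarrow> ('a \<Rightarrow> nat \<Rightarrow> nat) \<Rightarrow> ('b \<Rightarrow> nat \<Rightarrow> nat) \<Rightarrow> bool" where
  "peculiar_cut r1 r2 fl fu \<longleftrightarrow>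
     (\<forall>i\<in>Field r1. \<forall>j\<in>Field r1. (i,j) \<in> r1 \<and> i \<noteq> j \<longrightarrow> less_star (fl j) (fl i)) \<and>
     (\<forall>\<alpha>\<in>Field r2. \<forall>\<beta>\<in>Field r2. (\<alpha>,\<beta>) \<in> r2 \<and> \<alpha> \<noteq> \<beta> \<longrightarrow> less_star (fu \<alpha>) (fu \<beta>)) \<and>
     (\<forall>i\<in>Field r1. \<forall>\<alpha>\<in>Field r2. less_star (fu \<alpha>) (fl i)) \<and>
     (\<forall>f. (\<forall>i\<in>Field r1. le_star f (fl i)) \<longrightarrow> (\<exists>\<alpha>\<in>Field r2. le_star f (fu \<alpha>))) \<and>
     (\<forall>f. (\<forall>\<alpha>\<in>Field r2. le_star (fu \<alpha>) f) \<longrightarrow> (\<exists>i\<in>Field r1. le_star (fl i) f))"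

end

theory Submission imports Defs begin

definition D :: "nat \<Rightarrow> int \<Rightarrow> real set" where
  "D p b = {y. of_int b < y * 2^p \<and> y * 2^p < of_int b + 1}"

lemma D_open: "open (D p b)"
  unfolding D_def by (intro open_Collect_conj open_Collect_less continuous_intros)

lemma D_ne: "D p b \<noteq> {}"
proof -
  have "(of_int b + 1/2) / 2^p \<in> D p b" unfolding D_def by simp
  then show ?thesis by blast
qed

lemma D_floor: "y \<in> D p b \<Longrightarrow> \<lfloor>y * 2^p\<rfloor> = b"
  unfolding D_def by (simp add: floor_eq_iff)

lemma floor_shift:
  assumes "\<lfloor>y * 2^n\<rfloor> = c" "m \<le> n"
  shows "\<lfloor>(y::real) * 2^m\<rfloor> = c div 2^(n-m)"
proof -
  have "(2::real)^n = 2^m * 2^(n-m)" using assms(2)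
    by (metis le_add_diff_inverse power_add)
  then have "y * 2^m = (y * 2^n) / real_of_int (2^(n-m))" by simp
  then have "\<lfloor>y * 2^m\<rfloor> = \<lfloor>y * 2^n\<rfloor> div 2^(n-m)"
    using floor_divide_real_eq_div[of "2^(n-m)" "y * 2^n"] by simp
  then show ?thesis using assms by simp
qed

lemma D_sub:
  assumes "p \<le> n"
  shows "D n (b * 2^(n-p)) \<subseteq> D p b"
proof
  fix y assume y: "y \<in> D n (b * 2^(n-p))"
  then have "\<lfloor>y * 2^n\<rfloor> = b * 2^(n-p)" by (rule D_floor)
  then have f: "\<lfloor>y * 2^p\<rfloor> = b" using floor_shift[of y n _ p] assms by simp
  have "y * 2^p \<noteq> of_int b"
  proof
    assume "y * 2^p = of_int b"
    moreover have "(2::real)^n = 2^p * 2^(n-p)" using assms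
      by (metis le_add_diff_inverse power_add)
    ultimately have "y * 2^n = of_int b * 2^(n-p)"
      by (metis mult.assoc)
    then show False using y unfolding D_def by simp
  qed
  then show "y \<in> D p b" using f unfolding D_def by (simp add: floor_eq_iff)
qed

lemma D_sub2: "D (Suc p) (2*b+1) \<subseteq> D p b"
proof
  fix y assume "y \<in> D (Suc p) (2*b+1)"
  then have "of_int (2*b+1) < y * 2^p * 2" "y*2^p*2 < of_int (2*b+1) + 1"
    unfolding D_def by (simp_all add: mult_ac)
  then show "y \<in> D p b" unfolding D_def by simp
qed

lemma D_in_open:
  assumes "open U" "U \<noteq> {}"
  shows "\<exists>p\<ge>p0. \<exists>b. D p b \<subseteq> U"
proof -
  obtain x where x: "x \<in> U" using assms by blast
  then obtain e where e: "e > 0" "ball x e \<subseteq> U" using assms openE by blast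
  obtain p where p: "1 / 2^p < e" "p \<ge> p0"
  proof -
    obtain q where q: "(1/2::real)^q < e" using real_arch_pow_inv[of e "1/2"] e
      by auto
    have "(1/2::real)^(q+p0) \<le> (1/2)^q" by (rule power_decreasing) auto
    then have "(1/2::real)^(q+p0) < e" using q by linarith
    then have "1 / 2^(q+p0) < e" by (simp add: power_one_over)
    then show ?thesis using that[of "q+p0"] by simp
  qed
  define b where "b = \<lfloor>x * 2^p\<rfloor>"
  have "D p b \<subseteq> ball x e"
  proof
    fix y assume "y \<in> D p b"
    then have y: "of_int b < y * 2^p" "y * 2^p < of_int b + 1" unfolding D_def by auto
    have xb: "of_int b \<le> x * 2^p" "x * 2^p < of_int b + 1" unfolding b_def by linarith+
    have "\<bar>y * 2^p - x * 2^p\<bar> < 1" using y xb by linarith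
    then have "\<bar>y - x\<bar> * 2^p < 1" by (simp add: left_diff_distrib[symmetric] abs_mult)
    then have "\<bar>y - x\<bar> < 1 / 2^p" by (simp add: field_simps)
    then show "y \<in> ball x e" using p by (simp add: dist_real_def abs_minus_commute)
  qed
  then show ?thesis using e p by blast
qed

lemma nd_intro:
  assumes "\<And>U. open U \<Longrightarrow> U \<noteq> {} \<Longrightarrow> \<exists>V. open V \<and> V \<noteq> {} \<and> V \<subseteq> U \<and> V \<inter> A = {}"
  shows "nowhere_dense A"
  unfolding nowhere_dense_def
proof (rule ccontr)
  assume "interior (closure A) \<noteq> {}"
  then obtain V where V: "open V" "V \<noteq> {}" "V \<subseteq> interior (closure A)" "V \<inter> A = {}"
    using assms[of "interior (closure A)"] by blast
  have "V \<inter> closure A = {}" using V(1,4) by (simp add: open_Int_closure_eq_empty)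
  moreover have "V \<subseteq> closure A" using V(3) interior_subset by blast
  ultimately show False using V(2) by blast
qed


definition cnt :: "real \<Rightarrow> nat \<Rightarrow> nat" where
  "cnt y n = card {m. m < n \<and> odd \<lfloor>y * 2^m\<rfloor>}"

definition HH :: "(nat \<Rightarrow> nat \<Rightarrow> nat) \<Rightarrow> real \<Rightarrow> nat \<Rightarrow> nat" where
  "HH fl y n = Min ((\<lambda>j. fl j n) ` {..cnt y n})"

definition Bset :: "nat \<Rightarrow> real set" where
  "Bset m0 = {y. \<forall>m\<ge>m0. even \<lfloor>y * 2^m\<rfloor>}"

definition Mset :: "(nat \<Rightarrow> nat \<Rightarrow> nat) \<Rightarrow> (nat \<Rightarrow> nat) \<Rightarrow> nat \<Rightarrow> real set" where
  "Mset fl g m0 = {y. \<forall>n\<ge>m0. HH fl y n \<le> g n}"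

lemma B_nd: "nowhere_dense (Bset m0)"
proof (rule nd_intro)
  fix U :: "real set" assume "open U" "U \<noteq> {}"
  then obtain p b where p: "p \<ge> m0" "D p b \<subseteq> U" using D_in_open by blast
  have "D (Suc p) (2*b+1) \<inter> Bset m0 = {}"
  proof (rule ccontr)
    assume "D (Suc p) (2*b+1) \<inter> Bset m0 \<noteq> {}"
    then obtain y where y: "y \<in> D (Suc p) (2*b+1)" "y \<in> Bset m0" by blast
    have "\<lfloor>y * 2^Suc p\<rfloor> = 2*b+1" using D_floor[OF y(1)] .
    moreover have "\<forall>m\<ge>m0. even \<lfloor>y * 2^m\<rfloor>" using y(2) unfolding Bset_def by simp
    then have "m0 \<le> Suc p \<longrightarrow> even \<lfloor>y * 2^Suc p\<rfloor>" by blast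
    then have "even \<lfloor>y * 2^Suc p\<rfloor>" using p(1) by simp
    ultimately have "even (2*b+1)" by (simp only:)
    then show False by simp
  qed
  moreover have "D (Suc p) (2*b+1) \<subseteq> U" using D_sub2 p(2) by (rule subset_trans)
  ultimately show "\<exists>V. open V \<and> V \<noteq> {} \<and> V \<subseteq> U \<and> V \<inter> Bset m0 = {}"
    using D_open D_ne by (intro exI[of _ "D _ _"]) simp
qed

lemma M_nd:
  assumes g: "\<And>j. less_star g (fl j)"
  shows "nowhere_dense (Mset fl g m0)"
proof (rule nd_intro)
  fix U :: "real set" assume "open U" "U \<noteq> {}"
  then obtain p b where p: "p \<ge> m0" "D p b \<subseteq> U" using D_in_open by blast
  have "\<forall>\<^sub>F n in sequentially. \<forall>j\<in>{..Suc p}. g n < fl j n"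
    using g unfolding less_star_def by (intro eventually_ball_finite) auto
  then obtain N where N: "\<And>n j. n \<ge> N \<Longrightarrow> j \<le> Suc p \<Longrightarrow> g n < fl j n"
    unfolding eventually_sequentially by auto
  define n where "n = max N p"
  have np: "p \<le> n" "N \<le> n" "m0 \<le> n" using p(1) unfolding n_def by auto
  have "D n (b * 2^(n-p)) \<inter> Mset fl g m0 = {}"
  proof (rule ccontr)
    assume "D n (b * 2^(n-p)) \<inter> Mset fl g m0 \<noteq> {}"
    then obtain y where y: "y \<in> D n (b * 2^(n-p))" "y \<in> Mset fl g m0" by blast
    have fy: "\<lfloor>y * 2^n\<rfloor> = b * 2^(n-p)" using D_floor[OF y(1)] .
    have "{m. m < n \<and> odd \<lfloor>y * 2^m\<rfloor>} \<subseteq> {..p}"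
    proof
      fix m assume m: "m \<in> {m. m < n \<and> odd \<lfloor>y * 2^m\<rfloor>}"
      show "m \<in> {..p}"
      proof (rule ccontr)
        assume "m \<notin> {..p}"
        then have mp: "p < m" by simp
        have "n - p = (m - p) + (n - m)" using mp m by simp
        then have "(2::int)^(n-p) = 2^(m-p) * 2^(n-m)" by (metis power_add)
        then have e1: "b * 2^(n-p) = (b * 2^(m-p)) * 2^(n-m)" by (simp add: mult.assoc)
        have "\<lfloor>y * 2^m\<rfloor> = (b * 2^(n-p)) div 2^(n-m)"
          using floor_shift[OF fy] m by simp
        also have "\<dots> = b * 2^(m-p)" unfolding e1 by simp
        finally have "\<lfloor>y * 2^m\<rfloor> = b * 2^(m-p)" .
        moreover have "even ((b::int) * 2^(m-p))" using mp by simp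
        ultimately show False using m by simp
      qed
    qed
    then have "card {m. m < n \<and> odd \<lfloor>y * 2^m\<rfloor>} \<le> card {..p}"
      by (rule card_mono[OF finite_atMost])
    then have c: "cnt y n \<le> Suc p" unfolding cnt_def by simp
    have "\<forall>a\<in>(\<lambda>j. fl j n) ` {..cnt y n}. g n < a" using N[OF np(2)] c by auto
    then have "g n < HH fl y n" unfolding HH_def
      by (subst Min_gr_iff) auto
    moreover have "HH fl y n \<le> g n" using y(2) np(3) unfolding Mset_def by auto
    ultimately show False by simp
  qed
  moreover have "D n (b * 2^(n-p)) \<subseteq> U" using D_sub[OF np(1)] p(2) by (rule subset_trans)
  ultimately show "\<exists>V. open V \<and> V \<noteq> {} \<and> V \<subseteq> U \<and> V \<inter> Mset fl g m0 = {}"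
    using D_open D_ne by (intro exI[of _ "D _ _"]) simp
qed

lemma cover_aux:
  assumes "\<And>m0. y \<notin> Bset m0"
  shows "le_star (HH fl y) (fl i)"
proof -
  let ?S = "{m. odd \<lfloor>y * 2^m\<rfloor>}"
  have "\<forall>m0. \<exists>m\<ge>m0. m \<in> ?S" using assms unfolding Bset_def by auto
  then have "infinite ?S" using infinite_nat_iff_unbounded_le by blast
  then obtain T where T: "finite T" "card T = i" "T \<subseteq> ?S"
    using infinite_arbitrarily_large by blast
  obtain k where k: "T \<subseteq> {..<k}" using finite_nat_bounded[OF T(1)] by blast
  have "HH fl y n \<le> fl i n" if "n \<ge> k" for n
  proof -
    have "T \<subseteq> {m. m < n \<and> odd \<lfloor>y * 2^m\<rfloor>}" using T(3) k that by auto
    moreover have "finite {m. m < n \<and> odd \<lfloor>y * 2^m\<rfloor>}"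
      by (rule finite_subset[of _ "{..<n}"]) auto
    ultimately have "i \<le> cnt y n" unfolding cnt_def using T(2) card_mono by metis
    then show ?thesis unfolding HH_def by (intro Min_le) auto
  qed
  then show ?thesis unfolding le_star_def eventually_sequentially by blast
qed

theorem corollary3p2:
  fixes r2 :: "'b rel"
  assumes "Card_order r2" and "regularCard r2" and "infinite (Field r2)"
    and "\<exists>(fl :: nat \<Rightarrow> nat \<Rightarrow> nat) (fu :: 'b \<Rightarrow> nat \<Rightarrow> nat). peculiar_cut natLeq r2 fl fu"
  shows "covM_le r2"
proof -
  obtain fl :: "nat \<Rightarrow> nat \<Rightarrow> nat" and fu :: "'b \<Rightarrow> nat \<Rightarrow> nat"
    where pc: "peculiar_cut natLeq r2 fl fu" using assms(4) by blast
  note pc2 = pc[unfolded peculiar_cut_def Field_natLeq]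
  note c3 = pc2[THEN conjunct2, THEN conjunct2, THEN conjunct1]
  note c4 = pc2[THEN conjunct2, THEN conjunct2, THEN conjunct2, THEN conjunct1]
  have gam: "less_star (fu \<alpha>) (fl i)" if "\<alpha> \<in> Field r2" for i \<alpha>
    using c3 that by blast
  have del: "\<exists>\<alpha>\<in>Field r2. le_star f (fu \<alpha>)" if "\<And>i. le_star f (fl i)" for f
  proof -
    have "\<forall>i\<in>UNIV. le_star f (fl i)" using that by blast
    then show ?thesis using c4 by blast
  qed
  define G where "G \<alpha> = (\<Union>m. Bset m) \<union> (\<Union>m. Mset fl (fu \<alpha>) m)" for \<alpha>
  define F where "F = G ` Field r2"
  have "meagre (G \<alpha>)" if "\<alpha> \<in> Field r2" for \<alpha>
    unfolding meagre_def
  proof (intro exI conjI)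
    show "countable (range Bset \<union> range (Mset fl (fu \<alpha>)))" by simp
    show "\<forall>B\<in>range Bset \<union> range (Mset fl (fu \<alpha>)). nowhere_dense B"
      using B_nd M_nd[of "fu \<alpha>" fl, OF gam[OF that]] by blast
    show "G \<alpha> \<subseteq> \<Union> (range Bset \<union> range (Mset fl (fu \<alpha>)))" unfolding G_def by blast
  qed
  then have m: "\<forall>A\<in>F. meagre A" unfolding F_def by blast
  have u: "\<Union>F = UNIV"
  proof -
    have "y \<in> \<Union>F" for y
    proof (cases "\<exists>m0. y \<in> Bset m0")
      case True
      obtain \<alpha> where "\<alpha> \<in> Field r2" using assms(3) by (metis finite.emptyI ex_in_conv)
      then show ?thesis using True unfolding F_def G_def by blast
    next
      case False
      then have "\<And>i. le_star (HH fl y) (fl i)" using cover_aux by blast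
      then obtain \<alpha> where a: "\<alpha> \<in> Field r2" "le_star (HH fl y) (fu \<alpha>)" using del by blast
      then obtain m0 where "\<forall>n\<ge>m0. HH fl y n \<le> fu \<alpha> n"
        unfolding le_star_def eventually_sequentially by blast
      then have "y \<in> Mset fl (fu \<alpha>) m0" unfolding Mset_def by blast
      then show ?thesis using a(1) unfolding F_def G_def by blast
    qed
    then show ?thesis by blast
  qed
  have "(card_of F, r2) \<in> ordLeq" unfolding F_def
    using card_of_image ordLeq_ordIso_trans card_of_Field_ordIso[OF assms(1)] by blast
  then show ?thesis unfolding covM_le_def using m u by blast
qed

end
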